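(* Let $\mathbb{R}^{Nn\times Nn}_{s*}$ be the space of fourth-order tensors $\Xi=(\Xi_{\alpha i\beta j})$ ($\alpha,\beta\in\{1,\dots,N\}$, $i,j\in\{1,\dots,n\}$) satisfying $\Xi_{\alpha i\beta j}=\Xi_{\beta j\alpha i}=\Xi_{\beta i\alpha j}$. Then the relation $\Xi\le_\otimes\Theta$ is a partial ordering on $\mathbb{R}^{Nn\times Nn}_{s*}$ (reflexive, transitive and antisymmetric).
   Context: For fourth-order tensors, $\Xi\le_\otimes\Theta$ means $(\Theta-\Xi)_{\alpha i\beta j}\eta_\alpha w_i\eta_\beta w_j\ge0$ for all $\eta\in\mathbb{R}^N$ and $w\in\mathbb{R}^n$ (summation over repeated indices). *)

theory Defs
  imports Complex_Main
begin

text \<open>Fourth-order tensors Xi = (Xi_{alpha i beta j}) with alpha, beta ranging over a finite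
  index type 'N (representing {1..N}) and i, j over a finite index type 'n (representing {1..n}).\<close>
type_synonym ('N, 'n) tensor4 = "'N \<Rightarrow> 'n \<Rightarrow> 'N \<Rightarrow> 'n \<Rightarrow> real"

definition sym_star :: "('N::finite, 'n::finite) tensor4 set" where
  "sym_star = {Xi. \<forall>a i b j. Xi a i b j = Xi b j a i \<and> Xi a i b j = Xi b i a j}"

definition tensor_le :: "('N::finite, 'n::finite) tensor4 \<Rightarrow> ('N, 'n) tensor4 \<Rightarrow> bool" where
  "tensor_le Xi Theta \<longleftrightarrow>
     (\<forall>(eta :: 'N \<Rightarrow> real) (w :: 'n \<Rightarrow> real).
        (\<Sum>a\<in>UNIV. \<Sum>i\<in>UNIV. \<Sum>b\<in>UNIV. \<Sum>j\<in>UNIV.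
           (Theta a i b j - Xi a i b j) * eta a * w i * eta b * w j) \<ge> 0)"

end

theory Submission
  imports Defs
begin

definition GG :: "('N::finite, 'n::finite) tensor4 \<Rightarrow> ('N \<Rightarrow> real) \<Rightarrow> ('N \<Rightarrow> real) \<Rightarrow> ('n \<Rightarrow> real) \<Rightarrow> ('n \<Rightarrow> real) \<Rightarrow> real" where
  "GG D e f w v = (\<Sum>a\<in>UNIV. \<Sum>b\<in>UNIV. \<Sum>i\<in>UNIV. \<Sum>j\<in>UNIV. D a i b j * e a * f b * w i * v j)"

lemma GG_swap1: "(\<forall>a i b j. D a i b j = D b i a j) \<Longrightarrow> GG D e f w v = GG D f e w v"
  unfolding GG_def by (subst sum.swap) (simp add: mult_ac)

lemma GG_swap2: "(\<forall>a i b j. D a i b j = D a j b i) \<Longrightarrow> GG D e f w v = GG D e f v w"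
  unfolding GG_def by (subst (2) sum.swap) (simp add: mult_ac)

lemma GG_add1: "GG D (\<lambda>x. e x + e' x) f w v = GG D e f w v + GG D e' f w v"
  unfolding GG_def by (simp add: sum.distrib[symmetric] algebra_simps)
lemma GG_add2: "GG D e (\<lambda>x. f x + f' x) w v = GG D e f w v + GG D e f' w v"
  unfolding GG_def by (simp add: sum.distrib[symmetric] algebra_simps)
lemma GG_add3: "GG D e f (\<lambda>x. w x + w' x) v = GG D e f w v + GG D e f w' v"
  unfolding GG_def by (simp add: sum.distrib[symmetric] algebra_simps)
lemma GG_add4: "GG D e f w (\<lambda>x. v x + v' x) = GG D e f w v + GG D e f w v'"
  unfolding GG_def by (simp add: sum.distrib[symmetric] algebra_simps)

lemma GG_unit: "GG D (\<lambda>x. if x = a then 1 else 0) (\<lambda>x. if x = b then 1 else 0)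
   (\<lambda>x. if x = i then 1 else 0) (\<lambda>x. if x = j then 1 else 0) = D a i b j"
  unfolding GG_def by (simp add: mult.assoc[symmetric] if_distrib[of "\<lambda>x. _ * x"] sum.delta cong: if_cong)

lemma le_GG: "tensor_le Xi Theta \<longleftrightarrow> (\<forall>e w. GG (\<lambda>a i b j. Theta a i b j - Xi a i b j) e e w w \<ge> 0)"
proof -
  have "\<And>e w. GG (\<lambda>a i b j. Theta a i b j - Xi a i b j) e e w w =
    (\<Sum>a\<in>UNIV. \<Sum>i\<in>UNIV. \<Sum>b\<in>UNIV. \<Sum>j\<in>UNIV.
           (Theta a i b j - Xi a i b j) * e a * w i * e b * w j)"
    unfolding GG_def by (rule sum.cong[OF refl], subst sum.swap) (simp add: mult_ac)
  then show ?thesis unfolding tensor_le_def by simp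
qed

lemma zero_form:
  assumes s1: "\<forall>a i b j. D a i b j = D b i a j" and s2: "\<forall>a i b j. D a i b j = D a j b i"
    and z: "\<And>e w. GG D e e w w = 0"
  shows "D a i b j = 0"
proof -
  have p1: "GG D e f w w = 0" for e f w
  proof -
    have "GG D (\<lambda>x. e x + f x) (\<lambda>x. e x + f x) w w = 0" by (rule z)
    then have "GG D e e w w + GG D e f w w + GG D f e w w + GG D f f w w = 0"
      by (simp add: GG_add1 GG_add2)
    then show ?thesis using z GG_swap1[OF s1, of e f w w] by simp
  qed
  have p2: "GG D e f w v = 0" for e f w v
  proof -
    have "GG D e f (\<lambda>x. w x + v x) (\<lambda>x. w x + v x) = 0" by (rule p1)
    then have "GG D e f w w + GG D e f w v + GG D e f v w + GG D e f v v = 0"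
      by (simp add: GG_add3 GG_add4)
    then show ?thesis using p1 GG_swap2[OF s2, of e f w v] by simp
  qed
  show ?thesis using p2 GG_unit[of D a b i j] by simp
qed

theorem corollary3:
  "partial_order_on (sym_star :: ('N::finite, 'n::finite) tensor4 set)
     {(Xi, Theta). Xi \<in> sym_star \<and> Theta \<in> sym_star \<and> tensor_le Xi Theta}"
proof -
  let ?R = "{(Xi, Theta). Xi \<in> (sym_star :: ('N, 'n) tensor4 set) \<and> Theta \<in> sym_star \<and> tensor_le Xi Theta}"
  have refl: "refl_on sym_star ?R"
    unfolding refl_on_def by (auto simp: tensor_le_def)
  have trans: "trans ?R"
  proof (rule transI)
    fix x y z assume "(x, y) \<in> ?R" "(y, z) \<in> ?R"
    then show "(x, z) \<in> ?R"
    proof (clarsimp simp: le_GG)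
      fix e w
      assume a: "\<forall>e w. 0 \<le> GG (\<lambda>a i b j. y a i b j - x a i b j) e e w w"
        "\<forall>e w. 0 \<le> GG (\<lambda>a i b j. z a i b j - y a i b j) e e w w"
      have "GG (\<lambda>a i b j. z a i b j - x a i b j) e e w w =
        GG (\<lambda>a i b j. y a i b j - x a i b j) e e w w + GG (\<lambda>a i b j. z a i b j - y a i b j) e e w w"
        unfolding GG_def by (simp add: sum.distrib[symmetric] algebra_simps)
      moreover have "0 \<le> GG (\<lambda>a i b j. y a i b j - x a i b j) e e w w" using a(1) by blast
      moreover have "0 \<le> GG (\<lambda>a i b j. z a i b j - y a i b j) e e w w" using a(2) by blast
      ultimately show "0 \<le> GG (\<lambda>a i b j. z a i b j - x a i b j) e e w w" by linarith
    qed
  qed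
  have antisym: "antisym ?R"
  proof (rule antisymI)
    fix X T assume h: "(X, T) \<in> ?R" "(T, X) \<in> ?R"
    let ?D = "\<lambda>a i b j. T a i b j - X a i b j"
    have sX: "\<forall>a i b j. X a i b j = X b j a i \<and> X a i b j = X b i a j"
      and sT: "\<forall>a i b j. T a i b j = T b j a i \<and> T a i b j = T b i a j"
      using h by (auto simp: sym_star_def)
    have s1: "\<forall>a i b j. ?D a i b j = ?D b i a j"
    proof (intro allI)
      fix a i b j
      have "X a i b j = X b i a j" "T a i b j = T b i a j"
        using sX[rule_format, of a i b j] sT[rule_format, of a i b j] by blast+
      then show "?D a i b j = ?D b i a j" by simp
    qed
    have s2: "\<forall>a i b j. ?D a i b j = ?D a j b i" 
    proof (intro allI)
      fix a i b j
      have "X a i b j = X a j b i" using sX[rule_format, of a i b j] sX[rule_format, of b i a j] by simp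
      moreover have "T a i b j = T a j b i" using sT[rule_format, of a i b j] sT[rule_format, of b i a j] by simp
      ultimately show "?D a i b j = ?D a j b i" by simp
    qed
    have neg: "GG (\<lambda>a i b j. X a i b j - T a i b j) e e w w = - GG ?D e e w w" for e w
      unfolding GG_def by (simp add: sum_negf[symmetric] algebra_simps)
    have z: "GG ?D e e w w = 0" for e w
      using h neg[of e w] by (auto simp: le_GG) (smt (verit) )
    show "X = T"
    proof (intro ext)
      fix a i b j
      show "X a i b j = T a i b j" using zero_form[OF s1 s2 z, of a i b j] by simp
    qed
  qed
  show ?thesis unfolding partial_order_on_def preorder_on_def
    using refl trans antisym by auto
qed

end
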